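(* Let $\mathcal{F}\subseteq 2^{[n]}$ be an s-extremal family. Then there is a unique Sperner family $\mathcal{S}\subseteq 2^{[n]}$ and a unique function $h:\mathcal{S}\to 2^{[n]}$ with $h(S)\subseteq S$ for every $S\in\mathcal{S}$ such that $\mathcal{F}=\mathcal{F}(\mathcal{S},h)$ and $\mathrm{Sh}(\mathcal{F})=\mathcal{H}(\mathcal{S})$.
   Context: $[n]=\{1,\dots,n\}$. A Sperner family is a family of sets none of which is contained in another. $\mathcal{F}$ shatters $S$ if $\{F\cap S:F\in\mathcal{F}\}=2^S$; $\mathrm{Sh}(\mathcal{F})$ is the family of shattered sets; $\mathcal{F}$ is s-extremal if $|\mathrm{Sh}(\mathcal{F})|=|\mathcal{F}|$. For $H\subseteq S\subseteq[n]$, $\mathcal{Q}_{S,H}=\{H\cup B: B\subseteq[n]\setminus S\}$. $\mathcal{H}(\mathcal{S})=\{F\subseteq[n]: \text{no } S\in\mathcal{S} \text{ satisfies } S\subseteq F\}$, and $\mathcal{F}(\mathcal{S},h)=2^{[n]}\setminus\bigcup_{S\in\mathcal{S}}\mathcal{Q}_{S,h(S)}$. *)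

theory Defs
  imports Main "HOL-Library.FuncSet"
begin

definition sperner :: "'a set set \<Rightarrow> bool" where
  "sperner \<S> \<longleftrightarrow> (\<forall>A\<in>\<S>. \<forall>B\<in>\<S>. A \<subseteq> B \<longrightarrow> A = B)"

definition shatters :: "'a set set \<Rightarrow> 'a set \<Rightarrow> bool" where
  "shatters \<F> S \<longleftrightarrow> (\<lambda>F. F \<inter> S) ` \<F> = Pow S"

definition Sh :: "nat \<Rightarrow> nat set set \<Rightarrow> nat set set" where
  "Sh n \<F> = {S. S \<subseteq> {1..n} \<and> shatters \<F> S}"

definition s_extremal :: "nat \<Rightarrow> nat set set \<Rightarrow> bool" where
  "s_extremal n \<F> \<longleftrightarrow> card (Sh n \<F>) = card \<F>"

definition Q :: "nat \<Rightarrow> nat set \<Rightarrow> nat set \<Rightarrow> nat set set" where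
  "Q n S H = {H \<union> B | B. B \<subseteq> {1..n} - S}"

definition HS :: "nat \<Rightarrow> nat set set \<Rightarrow> nat set set" where
  "HS n \<S> = {F. F \<subseteq> {1..n} \<and> \<not> (\<exists>S\<in>\<S>. S \<subseteq> F)}"

definition FS :: "nat \<Rightarrow> nat set set \<Rightarrow> (nat set \<Rightarrow> nat set) \<Rightarrow> nat set set" where
  "FS n \<S> h = Pow {1..n} - (\<Union>S\<in>\<S>. Q n S (h S))"

end

theory Submission
  imports Defs
begin

definition sh :: "'a set set \<Rightarrow> 'a set set" where
  "sh F = {S. shatters F S}"

definition proj :: "'a \<Rightarrow> 'a set set \<Rightarrow> 'a set set" where
  "proj x F = (\<lambda>G. G - {x}) ` F"

definition pairs :: "'a \<Rightarrow> 'a set set \<Rightarrow> 'a set set" where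
  "pairs x F = {G \<in> F. x \<notin> G \<and> insert x G \<in> F}"

lemma shatters_sub_Union: "shatters F S \<Longrightarrow> S \<subseteq> \<Union>F"
proof -
  assume "shatters F S"
  then have "S \<in> (\<lambda>G. G \<inter> S) ` F" unfolding shatters_def by auto
  then show ?thesis by auto
qed

lemma sh_Pow: "F \<subseteq> Pow U \<Longrightarrow> sh F \<subseteq> Pow U"
  unfolding sh_def using shatters_sub_Union by blast

lemma shatters_mono: "shatters F S \<Longrightarrow> T \<subseteq> S \<Longrightarrow> shatters F T"
proof -
  assume a: "shatters F S" "T \<subseteq> S"
  have "(\<lambda>G. G \<inter> T) ` F = (\<lambda>A. A \<inter> T) ` ((\<lambda>G. G \<inter> S) ` F)"
    using a(2) by (auto simp: image_image Int_assoc Int_absorb2)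
  also have "\<dots> = (\<lambda>A. A \<inter> T) ` Pow S" using a(1) unfolding shatters_def by simp
  also have "\<dots> = Pow T"
  proof
    show "(\<lambda>A. A \<inter> T) ` Pow S \<subseteq> Pow T" by auto
    show "Pow T \<subseteq> (\<lambda>A. A \<inter> T) ` Pow S"
    proof
      fix B assume "B \<in> Pow T"
      then have "B = B \<inter> T" "B \<in> Pow S" using a(2) by auto
      then show "B \<in> (\<lambda>A. A \<inter> T) ` Pow S" by blast
    qed
  qed
  finally show ?thesis unfolding shatters_def .
qed

lemma card_split:
  assumes "finite U" "F \<subseteq> Pow U"
  shows "card F = card (proj x F) + card (pairs x F)"
proof -
  define F0 where "F0 = {G \<in> F. x \<notin> G}"
  define F1 where "F1 = {G \<in> F. x \<in> G}"
  define F1' where "F1' = (\<lambda>G. G - {x}) ` F1"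
  have finF: "finite F" using finite_subset[OF assms(2)] assms(1) by simp
  have fin0: "finite F0" "finite F1" "finite F1'" using finF unfolding F0_def F1_def F1'_def by auto
  have e1: "F = F0 \<union> F1" "F0 \<inter> F1 = {}" unfolding F0_def F1_def by auto
  have c1: "card F = card F0 + card F1"
    using card_Un_disjoint[OF fin0(1,2) e1(2)] e1(1) by simp
  have "inj_on (\<lambda>G. G - {x}) F1" unfolding F1_def inj_on_def
    by (metis (mono_tags, lifting) insert_Diff mem_Collect_eq)
  then have c2: "card F1' = card F1" unfolding F1'_def by (simp add: card_image)
  have "proj x F = F0 \<union> F1'"
  proof
    show "proj x F \<subseteq> F0 \<union> F1'"
    proof
      fix P assume "P \<in> proj x F"
      then obtain G where G: "G \<in> F" "P = G - {x}" unfolding proj_def by auto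
      show "P \<in> F0 \<union> F1'"
      proof (cases "x \<in> G")
        case True then have "P \<in> F1'" using G unfolding F1'_def F1_def by auto
        then show ?thesis by simp
      next
        case False then have "P = G" using G by auto
        then show ?thesis using G False unfolding F0_def by auto
      qed
    qed
    show "F0 \<union> F1' \<subseteq> proj x F"
    proof
      fix P assume "P \<in> F0 \<union> F1'"
      then show "P \<in> proj x F"
      proof
        assume "P \<in> F0" then have "P \<in> F" "P - {x} = P" unfolding F0_def by auto
        then show ?thesis unfolding proj_def by (metis image_eqI)
      next
        assume "P \<in> F1'" then show ?thesis unfolding F1'_def F1_def proj_def by auto
      qed
    qed
  qed
  moreover have "pairs x F = F0 \<inter> F1'"
  proof
    show "pairs x F \<subseteq> F0 \<inter> F1'"
    proof
      fix G assume "G \<in> pairs x F"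
      then have "G \<in> F" "x \<notin> G" "insert x G \<in> F" unfolding pairs_def by auto
      then show "G \<in> F0 \<inter> F1'" unfolding F0_def F1'_def F1_def
        by (auto intro!: image_eqI[where x="insert x G"])
    qed
    show "F0 \<inter> F1' \<subseteq> pairs x F"
    proof
      fix P assume P: "P \<in> F0 \<inter> F1'"
      then have p: "P \<in> F" "x \<notin> P" and "P \<in> F1'" unfolding F0_def by auto
      then obtain G where G: "G \<in> F" "x \<in> G" "P = G - {x}" unfolding F1'_def F1_def by auto
      then have "insert x P = G" by auto
      then show "P \<in> pairs x F" using p G(1) unfolding pairs_def by auto
    qed
  qed
  ultimately have "card (proj x F) + card (pairs x F) = card F0 + card F1'"
    using card_Un_Int[OF fin0(1) fin0(3)] by simp
  then show ?thesis using c1 c2 by simp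
qed

lemma sh_split:
  assumes "finite U" "F \<subseteq> Pow U"
  shows "card (sh (proj x F)) + card (sh (pairs x F)) \<le> card (sh F)"
proof -
  have finsh: "finite (sh F)" using finite_subset[OF sh_Pow[OF assms(2)]] assms(1) by simp
  have A: "sh (proj x F) \<subseteq> sh F"
  proof
    fix S assume "S \<in> sh (proj x F)"
    then have s: "shatters (proj x F) S" unfolding sh_def by simp
    have "x \<notin> \<Union>(proj x F)" unfolding proj_def by auto
    then have xS: "x \<notin> S" using shatters_sub_Union[OF s] by blast
    have "(\<lambda>G. G \<inter> S) ` (proj x F) = (\<lambda>G. G \<inter> S) ` F"
      unfolding proj_def image_image using xS by (intro image_cong) auto
    then show "S \<in> sh F" using s unfolding sh_def shatters_def by simp
  qed
  have B: "insert x ` sh (pairs x F) \<subseteq> sh F"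
  proof
    fix S' assume "S' \<in> insert x ` sh (pairs x F)"
    then obtain S where S': "S' = insert x S" and s: "shatters (pairs x F) S"
      unfolding sh_def by auto
    have "x \<notin> \<Union>(pairs x F)" unfolding pairs_def by auto
    then have xS: "x \<notin> S" using shatters_sub_Union[OF s] by blast
    have "Pow (insert x S) \<subseteq> (\<lambda>G. G \<inter> insert x S) ` F"
    proof
      fix P assume P: "P \<in> Pow (insert x S)"
      then have "P - {x} \<in> Pow S" by auto
      then obtain G0 where G0: "G0 \<in> pairs x F" "G0 \<inter> S = P - {x}"
        using s unfolding shatters_def by (metis (no_types, lifting) imageE)
      then have g: "G0 \<in> F" "x \<notin> G0" "insert x G0 \<in> F" unfolding pairs_def by auto
      show "P \<in> (\<lambda>G. G \<inter> insert x S) ` F"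
      proof (cases "x \<in> P")
        case True
        have "insert x G0 \<inter> insert x S = P" using G0(2) True by auto
        then show ?thesis using g(3) by blast
      next
        case False
        have "G0 \<inter> insert x S = P" using G0(2) False g(2) by auto
        then show ?thesis using g(1) by blast
      qed
    qed
    then have "shatters F S'" unfolding S' shatters_def by auto
    then show "S' \<in> sh F" unfolding sh_def by simp
  qed
  have D: "sh (proj x F) \<inter> insert x ` sh (pairs x F) = {}"
  proof -
    have "\<forall>S \<in> sh (proj x F). x \<notin> S"
      using shatters_sub_Union unfolding sh_def proj_def by fastforce
    then show ?thesis by auto
  qed
  have "inj_on (insert x) (sh (pairs x F))"
  proof -
    have "\<forall>S \<in> sh (pairs x F). x \<notin> S"
      using shatters_sub_Union unfolding sh_def pairs_def by fastforce
    then show ?thesis unfolding inj_on_def by (metis insert_ident)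
  qed
  then have c: "card (insert x ` sh (pairs x F)) = card (sh (pairs x F))" by (simp add: card_image)
  have "card (sh (proj x F) \<union> insert x ` sh (pairs x F)) \<le> card (sh F)"
    using A B finsh by (intro card_mono) auto
  moreover have "finite (sh (proj x F))" "finite (insert x ` sh (pairs x F))"
    using A B finsh finite_subset by auto
  ultimately show ?thesis using D c card_Un_disjoint by metis
qed

lemma pajor:
  assumes "finite U" "F \<subseteq> Pow U"
  shows "card F \<le> card (sh F)"
  using assms
proof (induction U arbitrary: F rule: finite_induct)
  case empty
  then have "F \<subseteq> {{}}" by auto
  then consider "F = {}" | "F = {{}}" by blast
  then show ?case
  proof cases
    case 2
    have "shatters F {}" unfolding 2 shatters_def by auto
    then have "sh F \<noteq> {}" unfolding sh_def by auto
    moreover have "finite (sh F)" using sh_Pow[OF empty(1)] finite_subset by auto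
    ultimately show ?thesis unfolding 2 by (simp add: Suc_leI card_gt_0_iff)
  qed simp
next
  case (insert x U)
  have "proj x F \<subseteq> Pow U" "pairs x F \<subseteq> Pow U"
    using insert(4) unfolding proj_def pairs_def by auto
  then have "card (proj x F) \<le> card (sh (proj x F))" "card (pairs x F) \<le> card (sh (pairs x F))"
    using insert(3) by auto
  then show ?case using card_split[OF _ insert(4), of x] sh_split[OF _ insert(4), of x] insert(1)
    by simp
qed

lemma extremal_proj:
  assumes "finite U" "F \<subseteq> Pow U" "card (sh F) = card F"
  shows "card (sh (proj x F)) = card (proj x F)"
proof -
  have "proj x F \<subseteq> Pow U" "pairs x F \<subseteq> Pow U"
    using assms(2) unfolding proj_def pairs_def by auto
  then have "card (proj x F) \<le> card (sh (proj x F))" "card (pairs x F) \<le> card (sh (pairs x F))"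
    using pajor[OF assms(1)] by auto
  then show ?thesis using card_split[OF assms(1,2), of x] sh_split[OF assms(1,2), of x] assms(3)
    by simp
qed

lemma extremal_remove:
  assumes "finite D" "finite U"
  shows "F \<subseteq> Pow U \<Longrightarrow> card (sh F) = card F \<Longrightarrow>
    card (sh ((\<lambda>G. G - D) ` F)) = card ((\<lambda>G. G - D) ` F)"
  using assms(1)
proof (induction D arbitrary: F rule: finite_induct)
  case empty
  then show ?case by simp
next
  case (insert x D)
  have e: "(\<lambda>G. G - insert x D) ` F = (\<lambda>G. G - D) ` proj x F"
    unfolding proj_def image_image by (intro image_cong) auto
  have "proj x F \<subseteq> Pow U" using insert(4) unfolding proj_def by auto
  moreover have "card (sh (proj x F)) = card (proj x F)"
    using extremal_proj[OF assms(2) insert(4,5)] .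
  ultimately show ?case unfolding e using insert(3) by blast
qed

lemma sh_trace:
  "sh ((\<lambda>G. G \<inter> S) ` F) = sh F \<inter> Pow S"
proof
  show "sh ((\<lambda>G. G \<inter> S) ` F) \<subseteq> sh F \<inter> Pow S"
  proof
    fix T assume "T \<in> sh ((\<lambda>G. G \<inter> S) ` F)"
    then have t: "shatters ((\<lambda>G. G \<inter> S) ` F) T" unfolding sh_def by simp
    then have TS: "T \<subseteq> S" using shatters_sub_Union by fastforce
    have "(\<lambda>A. A \<inter> T) ` ((\<lambda>G. G \<inter> S) ` F) = (\<lambda>G. G \<inter> T) ` F"
      unfolding image_image using TS by (intro image_cong) auto
    then show "T \<in> sh F \<inter> Pow S" using t TS unfolding sh_def shatters_def by simp
  qed
  show "sh F \<inter> Pow S \<subseteq> sh ((\<lambda>G. G \<inter> S) ` F)"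
  proof
    fix T assume "T \<in> sh F \<inter> Pow S"
    then have t: "shatters F T" and TS: "T \<subseteq> S" unfolding sh_def by auto
    have "(\<lambda>A. A \<inter> T) ` ((\<lambda>G. G \<inter> S) ` F) = (\<lambda>G. G \<inter> T) ` F"
      unfolding image_image using TS by (intro image_cong) auto
    then show "T \<in> sh ((\<lambda>G. G \<inter> S) ` F)" using t unfolding sh_def shatters_def by simp
  qed
qed

lemma Q_trace: "H \<subseteq> S \<Longrightarrow> G \<in> Q n S H \<Longrightarrow> G \<inter> S = H"
  unfolding Q_def by auto

lemma Q_mem: "G \<subseteq> {1..n} \<Longrightarrow> G \<inter> S = H \<Longrightarrow> G \<in> Q n S H"
  unfolding Q_def by (rule CollectI, rule exI[where x="G - S"]) auto

theorem lemma8: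
  fixes n :: nat and \<F> :: "nat set set"
  assumes "\<F> \<subseteq> Pow {1..n}"
    and "s_extremal n \<F>"
  shows "\<exists>!(\<S>, h). \<S> \<subseteq> Pow {1..n} \<and> sperner \<S>
            \<and> h \<in> \<S> \<rightarrow>\<^sub>E Pow {1..n} \<and> (\<forall>S\<in>\<S>. h S \<subseteq> S)
            \<and> \<F> = FS n \<S> h \<and> Sh n \<F> = HS n \<S>"
proof -
  define U where "U = {1..n}"
  have finU: "finite U" unfolding U_def by simp
  have FU: "\<F> \<subseteq> Pow U" using assms(1) unfolding U_def .
  have ShF: "Sh n \<F> = sh \<F>" using sh_Pow[OF FU] unfolding Sh_def sh_def U_def by auto
  have ext: "card (sh \<F>) = card \<F>" using assms(2) ShF unfolding s_extremal_def by simp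
  define M where "M S = Pow S - (\<lambda>G. G \<inter> S) ` \<F>" for S
  define S0 where "S0 = {S. S \<subseteq> U \<and> \<not> shatters \<F> S \<and> (\<forall>T. T \<subset> S \<longrightarrow> shatters \<F> T)}"
  define h0 where "h0 = (\<lambda>S\<in>S0. THE H. H \<in> M S)"
  have key: "\<exists>H. M S = {H}" if S: "S \<in> S0" for S
  proof -
    have SU: "S \<subseteq> U" using S unfolding S0_def by auto
    have finS: "finite S" using SU finU finite_subset by auto
    have tr: "(\<lambda>G. G \<inter> S) ` \<F> = (\<lambda>G. G - (U - S)) ` \<F>"
      using FU by (intro image_cong) auto
    have e: "card (sh ((\<lambda>G. G \<inter> S) ` \<F>)) = card ((\<lambda>G. G \<inter> S) ` \<F>)"
      unfolding tr using extremal_remove[of "U - S" U \<F>] finU FU ext by auto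
    have "sh \<F> \<inter> Pow S = Pow S - {S}"
    proof
      show "sh \<F> \<inter> Pow S \<subseteq> Pow S - {S}" using S unfolding S0_def sh_def by auto
      show "Pow S - {S} \<subseteq> sh \<F> \<inter> Pow S" using S unfolding S0_def sh_def by auto
    qed
    then have "card ((\<lambda>G. G \<inter> S) ` \<F>) = card (Pow S - {S})"
      using e sh_trace[of S \<F>] by simp
    also have "\<dots> = card (Pow S) - 1" using finS by (simp add: card_Diff_singleton)
    also have "\<dots> = 2 ^ card S - 1" using finS card_Pow by metis
    finally have "card ((\<lambda>G. G \<inter> S) ` \<F>) = 2 ^ card S - 1" .
    moreover have sub: "(\<lambda>G. G \<inter> S) ` \<F> \<subseteq> Pow S" by auto
    moreover have "finite ((\<lambda>G. G \<inter> S) ` \<F>)" using finite_subset[OF sub] finS by simp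
    ultimately have "card (M S) = card (Pow S) - (2 ^ card S - 1)"
      unfolding M_def using card_Diff_subset by metis
    moreover have "card (Pow S) = 2 ^ card S" using finS card_Pow by blast
    moreover have "(2::nat) ^ card S \<ge> 1" by simp
    ultimately have "card (M S) = 1" by linarith
    then show ?thesis by (simp add: card_1_singleton_iff)
  qed
  have h0M: "h0 S \<in> M S" if "S \<in> S0" for S
    using key[OF that] that unfolding h0_def by auto
  define P where "P = (\<lambda>\<S> h. \<S> \<subseteq> Pow {1..n} \<and> sperner \<S>
            \<and> h \<in> \<S> \<rightarrow>\<^sub>E Pow {1..n} \<and> (\<forall>S\<in>\<S>. h S \<subseteq> S)
            \<and> \<F> = FS n \<S> h \<and> Sh n \<F> = HS n \<S>)"
  have S0sp: "sperner S0" unfolding sperner_def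
  proof (intro ballI impI)
    fix A B assume "A \<in> S0" "B \<in> S0" "A \<subseteq> B"
    then show "A = B" unfolding S0_def by (metis (no_types, lifting) mem_Collect_eq psubsetI)
  qed
  have HS0: "HS n S0 = sh \<F>"
  proof
    show "HS n S0 \<subseteq> sh \<F>"
    proof
      fix G assume G: "G \<in> HS n S0"
      then have GU: "G \<subseteq> U" and nS: "\<not> (\<exists>S\<in>S0. S \<subseteq> G)" unfolding HS_def U_def by auto
      show "G \<in> sh \<F>"
      proof (rule ccontr)
        assume nG: "G \<notin> sh \<F>"
        define A where "A = {T. T \<subseteq> G \<and> \<not> shatters \<F> T}"
        have "A \<subseteq> Pow G" unfolding A_def by auto
        moreover have "finite G" using GU finU finite_subset by auto
        ultimately have "finite A" using finite_subset by auto
        moreover have "G \<in> A" using nG unfolding A_def sh_def by auto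
        ultimately obtain T where T: "T \<in> A" "\<forall>C\<in>A. C \<subseteq> T \<longrightarrow> T = C"
          using finite_has_minimal[of A] by blast
        have TG: "T \<subseteq> G" and nT: "\<not> shatters \<F> T" using T(1) unfolding A_def by auto
        have "shatters \<F> C" if C: "C \<subset> T" for C
        proof (rule ccontr)
          assume "\<not> shatters \<F> C"
          then have "C \<in> A" using C TG unfolding A_def by auto
          then have "T = C" using T(2) C by auto
          then show False using C by auto
        qed
        then have "T \<in> S0" unfolding S0_def using TG GU nT by auto
        then show False using nS T(1) unfolding A_def by auto
      qed
    qed
    show "sh \<F> \<subseteq> HS n S0"
    proof
      fix G assume G: "G \<in> sh \<F>"
      then have "G \<subseteq> U" using sh_Pow[OF FU] by auto
      moreover have "\<not> S \<subseteq> G" if "S \<in> S0" for S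
      proof
        assume "S \<subseteq> G"
        moreover have "shatters \<F> G" using G unfolding sh_def by simp
        ultimately have "shatters \<F> S" using shatters_mono by metis
        then show False using that unfolding S0_def by simp
      qed
      ultimately show "G \<in> HS n S0" unfolding HS_def U_def by auto
    qed
  qed
  have FS0: "\<F> = FS n S0 h0"
  proof
    show "\<F> \<subseteq> FS n S0 h0"
    proof
      fix G assume G: "G \<in> \<F>"
      have "G \<notin> Q n S (h0 S)" if S: "S \<in> S0" for S
      proof
        assume q: "G \<in> Q n S (h0 S)"
        have hh: "h0 S \<subseteq> S" "h0 S \<notin> (\<lambda>G. G \<inter> S) ` \<F>" using h0M[OF S] unfolding M_def by auto
        have "G \<inter> S = h0 S" using Q_trace[OF hh(1) q] .
        then have "h0 S \<in> (\<lambda>G. G \<inter> S) ` \<F>" using G by (metis image_eqI)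
        then show False using hh(2) by simp
      qed
      then show "G \<in> FS n S0 h0" using G FU unfolding FS_def U_def by auto
    qed
    then have sub: "\<F> \<subseteq> FS n S0 h0" .
    have FSU: "FS n S0 h0 \<subseteq> Pow U" unfolding FS_def U_def by auto
    have finFS: "finite (FS n S0 h0)" using finite_subset[OF FSU] finU by simp
    have "sh (FS n S0 h0) \<subseteq> HS n S0"
    proof
      fix T assume T: "T \<in> sh (FS n S0 h0)"
      then have t: "shatters (FS n S0 h0) T" unfolding sh_def by simp
      have "T \<subseteq> U" using T sh_Pow[OF FSU] by auto
      moreover have "\<not> S \<subseteq> T" if S: "S \<in> S0" for S
      proof
        assume "S \<subseteq> T"
        then have "shatters (FS n S0 h0) S" using shatters_mono t by blast
        moreover have "h0 S \<in> Pow S" using h0M[OF S] unfolding M_def by auto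
        ultimately obtain G where G: "G \<in> FS n S0 h0" "G \<inter> S = h0 S"
          unfolding shatters_def by (metis imageE)
        then have "G \<subseteq> {1..n}" unfolding FS_def by auto
        then have "G \<in> Q n S (h0 S)" using Q_mem G(2) by blast
        then show False using G(1) S unfolding FS_def by auto
      qed
      ultimately show "T \<in> HS n S0" unfolding HS_def U_def by auto
    qed
    then have "card (sh (FS n S0 h0)) \<le> card (sh \<F>)"
      using HS0 sh_Pow[OF FU] finU by (simp add: card_mono finite_subset)
    moreover have "card (FS n S0 h0) \<le> card (sh (FS n S0 h0))" using pajor[OF finU FSU] .
    ultimately have "card (FS n S0 h0) \<le> card \<F>" using ext by simp
    then show "FS n S0 h0 \<subseteq> \<F>" using sub finFS card_seteq by blast
  qed
  have exP: "P S0 h0"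
    unfolding P_def
  proof (intro conjI)
    show "S0 \<subseteq> Pow {1..n}" unfolding S0_def U_def by auto
    show "sperner S0" by (rule S0sp)
    show "h0 \<in> S0 \<rightarrow>\<^sub>E Pow {1..n}"
    proof -
      have "h0 S \<in> Pow {1..n}" if "S \<in> S0" for S
        using h0M[OF that] that unfolding M_def S0_def U_def by auto
      moreover have "h0 \<in> extensional S0" unfolding h0_def by simp
      ultimately show ?thesis by (simp add: PiE_iff)
    qed
    show "\<forall>S\<in>S0. h0 S \<subseteq> S" using h0M unfolding M_def by auto
    show "\<F> = FS n S0 h0" by (rule FS0)
    show "Sh n \<F> = HS n S0" using ShF HS0 by simp
  qed
  have uniq: "\<S> = S0 \<and> h = h0" if PP: "P \<S> h" for \<S> h
  proof -
    have SU: "\<S> \<subseteq> Pow U" and sp: "sperner \<S>" and hE: "h \<in> \<S> \<rightarrow>\<^sub>E Pow {1..n}"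
      and hS: "\<forall>S\<in>\<S>. h S \<subseteq> S" and FF: "\<F> = FS n \<S> h" and HH: "sh \<F> = HS n \<S>"
      using PP ShF unfolding P_def U_def by auto
    have sub1: "\<S> \<subseteq> S0"
    proof
      fix S assume S: "S \<in> \<S>"
      have "S \<notin> HS n \<S>" using S unfolding HS_def by auto
      then have "\<not> shatters \<F> S" using HH unfolding sh_def by auto
      moreover have "shatters \<F> T" if T: "T \<subset> S" for T
      proof -
        have "\<not> (\<exists>S'\<in>\<S>. S' \<subseteq> T)"
        proof
          assume "\<exists>S'\<in>\<S>. S' \<subseteq> T"
          then obtain S' where S': "S' \<in> \<S>" "S' \<subseteq> T" by blast
          then have "S' \<subseteq> S" using T by auto
          then have "S' = S" using sp S' S unfolding sperner_def by auto
          then show False using S' T by auto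
        qed
        then have "T \<in> HS n \<S>" using T S SU unfolding HS_def U_def by auto
        then show ?thesis using HH unfolding sh_def by auto
      qed
      ultimately show "S \<in> S0" using S SU unfolding S0_def by auto
    qed
    have eqS: "\<S> = S0"
    proof
      show "S0 \<subseteq> \<S>"
      proof
        fix S assume S: "S \<in> S0"
        then have "S \<notin> sh \<F>" "S \<subseteq> U" unfolding S0_def sh_def by auto
        then have "S \<notin> HS n \<S>" using HH by auto
        then obtain S' where "S' \<in> \<S>" "S' \<subseteq> S" using \<open>S \<subseteq> U\<close> unfolding HS_def U_def by auto
        then show "S \<in> \<S>" using sub1 S0sp S unfolding sperner_def by auto
      qed
    qed (rule sub1)
    have "h S = h0 S" for S
    proof (cases "S \<in> S0")
      case True
      then have S: "S \<in> \<S>" using eqS by simp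
      have "h S \<notin> (\<lambda>G. G \<inter> S) ` \<F>"
      proof
        assume "h S \<in> (\<lambda>G. G \<inter> S) ` \<F>"
        then obtain G where G: "G \<in> \<F>" "G \<inter> S = h S" by auto
        then have "G \<subseteq> {1..n}" using assms(1) by auto
        then have "G \<in> Q n S (h S)" using Q_mem G(2) by blast
        then show False using G(1) S FF unfolding FS_def by auto
      qed
      then have "h S \<in> M S" using hS S unfolding M_def by auto
      then show ?thesis using key[OF True] h0M[OF True] by auto
    next
      case False
      then show ?thesis using hE eqS unfolding h0_def PiE_def extensional_def by auto
    qed
    then show ?thesis using eqS by auto
  qed
  show ?thesis
    unfolding P_def[symmetric]
  proof (rule ex1I[where a="(S0, h0)"])
    show "case (S0, h0) of (\<S>, h) \<Rightarrow> P \<S> h" using exP by simp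
    fix y assume "case y of (\<S>, h) \<Rightarrow> P \<S> h"
    then show "y = (S0, h0)" using uniq by (cases y) auto
  qed
qed

end
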